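(* Let $(B_i)_{i}$ be a family of open horoballs in $\mathbb{H}_m$ with pairwise disjoint closures, and let $Q=\bigcup_iB_i$. Then (1) ${\sf{dist}}_{Q^c}$ is a distance on $\mathbb{H}_m\setminus Q$ (i.e., it takes only finite values); (2) for every index $i$ and all $x,y\in\partial B_i$, ${\sf{dist}}_{Q^c}(x,y)={\sf{dist}}_{\partial B_i}(x,y)$.
   Context: $\mathbb{H}_m$ ($m$ possibly infinite) is the hyperbolic space with distance ${\sf{dist}}$. For a subset $W$ of a metric space $(X,d)$ and $x,y\notin W$, ${\sf{dist}}_{W^c}(x,y)=\sup_{\varepsilon>0}\inf\{\sum_{i=0}^{n-1}d(x_i,x_{i+1})\}$ over chains $x_0=x,\dots,x_n=y$ in $X\setminus W$ with $d(x_i,x_{i+1})\le\varepsilon$; for $Y\subset X$, ${\sf{dist}}_Y$ denotes the induced intrinsic distance on $Y$. An open horoball is a set $\{v:0<\langle v|\xi\rangle<\epsilon\}$ with $\xi$ isotropic, $\epsilon>0$. *)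

theory Defs
  imports "HOL-Analysis.Analysis"
begin

text \<open>Minkowski space R^{1,m} modelled as real x H with H a real Hilbert space
  (H of any dimension, finite or infinite). Bilinear form of signature (1,m).\<close>

definition mink :: "real \<times> 'a::real_inner \<Rightarrow> real \<times> 'a \<Rightarrow> real" where
  "mink v w = fst v * fst w - inner (snd v) (snd w)"

definition hyp_space :: "(real \<times> 'a::{real_inner,complete_space}) set" where
  "hyp_space = {v. mink v v = 1 \<and> fst v > 0}"

definition hdist :: "real \<times> 'a::real_inner \<Rightarrow> real \<times> 'a \<Rightarrow> real" where
  "hdist v w = arcosh (mink v w)"

definition isotropic :: "real \<times> 'a::real_inner \<Rightarrow> bool" where
  "isotropic \<xi> \<longleftrightarrow> \<xi> \<noteq> 0 \<and> mink \<xi> \<xi> = 0"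

definition open_horoball :: "(real \<times> 'a::{real_inner,complete_space}) set \<Rightarrow> bool" where
  "open_horoball B \<longleftrightarrow> (\<exists>\<xi> e. isotropic \<xi> \<and> e > 0 \<and>
      B = {v \<in> hyp_space. 0 < mink v \<xi> \<and> mink v \<xi> < e})"

definition hclosure :: "(real \<times> 'a::{real_inner,complete_space}) set \<Rightarrow> (real \<times> 'a) set" where
  "hclosure A = {x \<in> hyp_space. \<forall>e>0. \<exists>y\<in>A. hdist x y < e}"

definition hboundary :: "(real \<times> 'a::{real_inner,complete_space}) set \<Rightarrow> (real \<times> 'a) set" where
  "hboundary A = hclosure A \<inter> hclosure (hyp_space - A)"

text \<open>Chain (intrinsic) distance on a subset S of a metric space with distance d:
  sup over eps>0 of inf of lengths of eps-chains from x to y lying in S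
  (an infimum over the empty set is +infinity).\<close>
definition chain_dist :: "('p \<Rightarrow> 'p \<Rightarrow> real) \<Rightarrow> 'p set \<Rightarrow> 'p \<Rightarrow> 'p \<Rightarrow> ereal" where
  "chain_dist d S x y =
     (SUP eps\<in>{0<..}. INF L \<in> {(\<Sum>i<n. d (p i) (p (Suc i))) | p n.
          p 0 = x \<and> p n = y \<and> (\<forall>i\<le>n. p i \<in> S) \<and> (\<forall>i<n. d (p i) (p (Suc i)) \<le> eps)}.
        ereal L)"

end

theory Submission
  imports Defs
begin


lemma mink_sym: "mink v w = mink w v"
  by (simp add: mink_def inner_commute)

lemma mink_add_left: "mink (v + w) u = mink v u + mink w u"
  by (simp add: mink_def inner_add_left algebra_simps)
lemma mink_add_right: "mink u (v + w) = mink u v + mink u w"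
  by (simp add: mink_def inner_add_right algebra_simps)
lemma mink_diff_left: "mink (v - w) u = mink v u - mink w u"
  by (simp add: mink_def inner_diff_left algebra_simps)
lemma mink_diff_right: "mink u (v - w) = mink u v - mink u w"
  by (simp add: mink_def inner_diff_right algebra_simps)
lemma mink_scale_left: "mink (r *\<^sub>R v) u = r * mink v u"
  by (simp add: mink_def algebra_simps)
lemma mink_scale_right: "mink u (r *\<^sub>R v) = r * mink u v"
  by (simp add: mink_def algebra_simps)
lemma mink_minus_left: "mink (- v) u = - mink v u"
  by (simp add: mink_def)

lemmas mink_simps = mink_add_left mink_add_right mink_diff_left mink_diff_right
  mink_scale_left mink_scale_right mink_minus_left

lemma orth_nonpos:
  fixes p y :: "real \<times> 'a::real_inner"
  assumes "snd y \<bullet> snd y \<le> (fst y)^2" "fst y \<noteq> 0" "mink p y = 0"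
  shows "mink p p \<le> 0"
proof -
  have e: "fst p * fst y = snd p \<bullet> snd y" using assms(3) by (simp add: mink_def)
  have "(fst p * fst y)^2 \<le> (snd p \<bullet> snd p) * (snd y \<bullet> snd y)"
    unfolding e by (rule Cauchy_Schwarz_ineq)
  also have "\<dots> \<le> (snd p \<bullet> snd p) * (fst y)^2"
    by (rule mult_left_mono[OF assms(1)]) simp
  finally have "(fst p)^2 * (fst y)^2 \<le> (snd p \<bullet> snd p) * (fst y)^2"
    by (simp add: power_mult_distrib)
  hence "(fst p)^2 \<le> snd p \<bullet> snd p" using assms(2) by simp
  thus ?thesis by (simp add: mink_def power2_eq_square)
qed

lemma hyp_iff: "v \<in> hyp_space \<longleftrightarrow> mink v v = 1 \<and> fst v > 0"
  by (simp add: hyp_space_def)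

lemma hyp_snd: "v \<in> hyp_space \<Longrightarrow> snd v \<bullet> snd v \<le> (fst v)^2"
  by (simp add: hyp_space_def mink_def power2_eq_square)

lemma hyp_ge1:
  assumes "v \<in> hyp_space" "w \<in> hyp_space"
  shows "mink v w \<ge> 1"
proof -
  define a where "a = norm (snd v)"
  define b where "b = norm (snd w)"
  have v: "(fst v)^2 = 1 + a^2" and w: "(fst w)^2 = 1 + b^2"
  proof -
    have "a^2 = snd v \<bullet> snd v" "b^2 = snd w \<bullet> snd w"
      by (simp_all add: a_def b_def power2_norm_eq_inner)
    thus "(fst v)^2 = 1 + a^2" "(fst w)^2 = 1 + b^2"
      using assms by (auto simp: hyp_space_def mink_def power2_eq_square)
  qed
  have pv: "fst v > 0" "fst w > 0" using assms by (auto simp: hyp_space_def)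
  have ab: "a \<ge> 0" "b \<ge> 0" by (auto simp: a_def b_def)
  have "(fst v * fst w)^2 - (1 + a * b)^2 = (a - b)^2"
    unfolding power_mult_distrib v w by (simp add: algebra_simps power2_eq_square)
  moreover have "(a - b)^2 \<ge> 0" by (rule zero_le_power2)
  ultimately have "(1 + a * b)^2 \<le> (fst v * fst w)^2" by linarith
  hence "1 + a * b \<le> fst v * fst w"
    by (rule power2_le_imp_le) (use pv in auto)
  moreover have "snd v \<bullet> snd w \<le> a * b" unfolding a_def b_def by (rule norm_cauchy_schwarz)
  ultimately show ?thesis by (simp add: mink_def)
qed



lemma isotropic_snd: "isotropic \<xi> \<Longrightarrow> snd \<xi> \<bullet> snd \<xi> = (fst \<xi>)^2"
  by (simp add: isotropic_def mink_def power2_eq_square)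

lemma isotropic_fst: assumes "isotropic \<xi>" shows "fst \<xi> \<noteq> 0"
proof
  assume "fst \<xi> = 0"
  hence "snd \<xi> = 0" using isotropic_snd[OF assms] by simp
  with \<open>fst \<xi> = 0\<close> have "\<xi> = 0" by (simp add: prod_eq_iff)
  thus False using assms by (simp add: isotropic_def)
qed

lemma hyp_mink_iso_sign:
  assumes v: "v \<in> hyp_space" and xi: "isotropic \<xi>"
  shows "fst \<xi> > 0 \<Longrightarrow> mink v \<xi> > 0" and "fst \<xi> < 0 \<Longrightarrow> mink v \<xi> < 0"
proof -
  define a where "a = norm (snd v)"
  have ea: "(fst v)^2 = 1 + a^2"
  proof -
    have "a^2 = snd v \<bullet> snd v" by (simp add: a_def power2_norm_eq_inner)
    thus ?thesis using v by (auto simp: hyp_space_def mink_def power2_eq_square)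
  qed
  have pv: "fst v > 0" using v by (simp add: hyp_space_def)
  have a0: "a \<ge> 0" by (simp add: a_def)
  have "a^2 < (fst v)^2" using ea by simp
  hence alt: "a < fst v" using pv a0 by (simp add: power_less_imp_less_base)
  have nx: "norm (snd \<xi>) = \<bar>fst \<xi>\<bar>"
    using isotropic_snd[OF xi] by (simp add: norm_eq_sqrt_inner)
  have cs: "\<bar>snd v \<bullet> snd \<xi>\<bar> \<le> a * \<bar>fst \<xi>\<bar>"
    unfolding a_def nx[symmetric] by (rule Cauchy_Schwarz_ineq2)
  have fx: "fst \<xi> \<noteq> 0" by (rule isotropic_fst[OF xi])
  show "fst \<xi> > 0 \<Longrightarrow> mink v \<xi> > 0"
  proof -
    assume f: "fst \<xi> > 0"
    have "a * fst \<xi> < fst v * fst \<xi>" using alt f by simp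
    thus ?thesis using cs f unfolding mink_def abs_le_iff by linarith
  qed
  show "fst \<xi> < 0 \<Longrightarrow> mink v \<xi> < 0"
  proof -
    assume f: "fst \<xi> < 0"
    have "a * (- fst \<xi>) < fst v * (- fst \<xi>)" using alt f by simp
    thus ?thesis using cs f unfolding mink_def abs_le_iff by linarith
  qed
qed

lemma busemann:
  assumes v: "v \<in> hyp_space" and w: "w \<in> hyp_space" and xi: "isotropic \<xi>"
  shows "(mink v \<xi>)^2 + (mink w \<xi>)^2 \<le> 2 * mink v \<xi> * mink w \<xi> * mink v w"
proof -
  define a where "a = mink v \<xi>"
  define b where "b = mink w \<xi>"
  define z where "z = b *\<^sub>R v - a *\<^sub>R w"
  have "mink z \<xi> = 0" by (simp add: z_def mink_simps a_def b_def)
  hence "mink z z \<le> 0"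
    by (intro orth_nonpos[OF _ isotropic_fst[OF xi]]) (simp_all add: isotropic_snd[OF xi])
  moreover have "mink z z = b^2 + a^2 - 2 * a * b * mink v w"
    using v w by (simp add: z_def mink_simps hyp_space_def mink_sym[of w v] power2_eq_square algebra_simps)
  ultimately show ?thesis by (simp add: a_def b_def)
qed

lemma orth_cs:
  assumes y: "y \<in> hyp_space" and p: "mink p y = 0" and q: "mink q y = 0"
  shows "(mink p q)^2 \<le> mink p p * mink q q"
proof -
  have nn: "\<And>t. mink (p + t *\<^sub>R q) (p + t *\<^sub>R q) \<le> 0"
  proof -
    fix t
    show "mink (p + t *\<^sub>R q) (p + t *\<^sub>R q) \<le> 0"
      by (rule orth_nonpos[OF hyp_snd[OF y]]) (use y p q in \<open>auto simp: hyp_space_def mink_simps\<close>)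
  qed
  have ex: "\<And>t. mink (p + t *\<^sub>R q) (p + t *\<^sub>R q) = mink p p + 2 * t * mink p q + t^2 * mink q q"
    by (simp add: mink_simps mink_sym[of q p] power2_eq_square algebra_simps)
  define P where "P = mink p p"
  define B where "B = mink p q"
  define C where "C = mink q q"
  have h: "\<And>t. P + 2 * t * B + t^2 * C \<le> 0" using nn ex unfolding P_def B_def C_def by metis
  have C0: "C \<le> 0" unfolding C_def
    by (rule orth_nonpos[OF hyp_snd[OF y]]) (use y q in \<open>auto simp: hyp_space_def\<close>)
  show ?thesis unfolding P_def[symmetric] B_def[symmetric] C_def[symmetric]
  proof (cases "C = 0")
    case True
    have "B = 0"
    proof (rule ccontr)
      assume "B \<noteq> 0"
      have "P + 2 * ((1 - P) / (2 * B)) * B + ((1 - P) / (2 * B))^2 * C \<le> 0" by (rule h)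
      thus False using True \<open>B \<noteq> 0\<close> by (simp add: field_simps)
    qed
    thus "B^2 \<le> P * C" using True by simp
  next
    case False
    hence Cn: "C < 0" using C0 by simp
    have "P + 2 * (- B / C) * B + (- B / C)^2 * C \<le> 0" by (rule h)
    hence "P - B^2 / C \<le> 0" using Cn by (simp add: power2_eq_square field_simps)
    hence "P * C - B^2 \<ge> 0" using Cn by (simp add: field_simps)
    thus "B^2 \<le> P * C" by simp
  qed
qed



lemma arcosh_mono_real:
  assumes "1 \<le> x" "x \<le> (y::real)" shows "arcosh x \<le> arcosh y"
  using arcosh_less_iff_real[of y x] assms by (simp add: not_less[symmetric])

lemma hdist_sym: "hdist v w = hdist w v"
  by (simp add: hdist_def mink_sym)

lemma hdist_self: "v \<in> hyp_space \<Longrightarrow> hdist v v = 0"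
  by (simp add: hdist_def hyp_space_def)

lemma hdist_nonneg: "v \<in> hyp_space \<Longrightarrow> w \<in> hyp_space \<Longrightarrow> hdist v w \<ge> 0"
  unfolding hdist_def by (rule arcosh_nonneg_real) (rule hyp_ge1)

lemma cosh_hdist: "v \<in> hyp_space \<Longrightarrow> w \<in> hyp_space \<Longrightarrow> cosh (hdist v w) = mink v w"
  unfolding hdist_def by (rule cosh_arcosh_real) (rule hyp_ge1)

lemma hdist_le_iff:
  assumes "v \<in> hyp_space" "w \<in> hyp_space" "d \<ge> 0"
  shows "hdist v w \<le> d \<longleftrightarrow> mink v w \<le> cosh d"
proof -
  have "hdist v w \<le> d \<longleftrightarrow> cosh (hdist v w) \<le> cosh d"
    using cosh_real_nonneg_le_iff[OF hdist_nonneg[OF assms(1,2)] assms(3)] by simp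
  thus ?thesis using cosh_hdist[OF assms(1,2)] by simp
qed

lemma hdist_triangle:
  assumes x: "x \<in> hyp_space" and y: "y \<in> hyp_space" and z: "z \<in> hyp_space"
  shows "hdist x z \<le> hdist x y + hdist y z"
proof -
  define c1 where "c1 = mink x y"
  define c2 where "c2 = mink y z"
  define c3 where "c3 = mink x z"
  have yy: "mink y y = 1" using y by (simp add: hyp_space_def)
  have xx: "mink x x = 1" using x by (simp add: hyp_space_def)
  have zz: "mink z z = 1" using z by (simp add: hyp_space_def)
  define x' where "x' = x - c1 *\<^sub>R y"
  define z' where "z' = z - c2 *\<^sub>R y"
  have o1: "mink x' y = 0" by (simp add: x'_def mink_simps yy c1_def)
  have o2: "mink z' y = 0" by (simp add: z'_def mink_simps yy c2_def mink_sym[of z y])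
  have "(mink x' z')^2 \<le> mink x' x' * mink z' z'" by (rule orth_cs[OF y o1 o2])
  moreover have "mink x' z' = c3 - c1 * c2"
    by (simp add: x'_def z'_def mink_simps yy c1_def c2_def c3_def mink_sym[of y x] algebra_simps)
  moreover have "mink x' x' = 1 - c1^2"
    by (simp add: x'_def mink_simps yy xx c1_def mink_sym[of y x] power2_eq_square algebra_simps)
  moreover have "mink z' z' = 1 - c2^2"
    by (simp add: z'_def mink_simps yy zz c2_def mink_sym[of z y] power2_eq_square algebra_simps)
  ultimately have "(c3 - c1 * c2)^2 \<le> (c1^2 - 1) * (c2^2 - 1)" by (simp add: algebra_simps)
  hence "sqrt ((c3 - c1 * c2)^2) \<le> sqrt ((c1^2 - 1) * (c2^2 - 1))" by (rule real_sqrt_le_mono)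
  hence "c3 - c1 * c2 \<le> sqrt (c1^2 - 1) * sqrt (c2^2 - 1)" by (simp add: real_sqrt_mult)
  moreover have "c1 \<ge> 1" "c2 \<ge> 1" "c3 \<ge> 1" unfolding c1_def c2_def c3_def using x y z by (auto intro: hyp_ge1)
  ultimately have "c3 \<le> cosh (arcosh c1) * cosh (arcosh c2) + sinh (arcosh c1) * sinh (arcosh c2)"
    by (simp add: sinh_arcosh_real)
  hence "c3 \<le> cosh (hdist x y + hdist y z)" by (simp add: cosh_add hdist_def c1_def c2_def)
  moreover have "hdist x y + hdist y z \<ge> 0" using hdist_nonneg[OF x y] hdist_nonneg[OF y z] by linarith
  ultimately show ?thesis using hdist_le_iff[OF x z] c3_def by simp
qed



definition G :: "real \<times> 'a::real_inner \<Rightarrow> real \<times> 'a \<Rightarrow> real \<Rightarrow> real \<times> 'a" where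
  "G \<xi> v l = l *\<^sub>R v + ((1/l - l) / (2 * mink v \<xi>)) *\<^sub>R \<xi>"

lemma iso_self: "isotropic \<xi> \<Longrightarrow> mink \<xi> \<xi> = 0" by (simp add: isotropic_def)

lemma G_xi:
  assumes "isotropic \<xi>" "mink v \<xi> \<noteq> 0"
  shows "mink (G \<xi> v l) \<xi> = l * mink v \<xi>"
  using assms by (simp add: G_def mink_simps iso_self)

lemma G_v:
  assumes "isotropic \<xi>" "mink v \<xi> \<noteq> 0" "mink v v = 1" "l \<noteq> 0"
  shows "mink v (G \<xi> v l) = (l + 1/l) / 2"
proof -
  have "mink v (G \<xi> v l) = l + ((1/l - l) / (2 * mink v \<xi>)) * mink v \<xi>"
    using assms by (simp add: G_def mink_simps)
  also have "((1/l - l) / (2 * mink v \<xi>)) * mink v \<xi> = (1/l - l) / 2" using assms by simp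
  finally show ?thesis by (simp add: field_simps)
qed

lemma G_G:
  assumes "isotropic \<xi>" "mink v \<xi> \<noteq> 0" "mink w \<xi> \<noteq> 0" 
  shows "mink (G \<xi> v l) (G \<xi> w m) = l * m * mink v w + l * ((1/m - m) / (2 * mink w \<xi>)) * mink v \<xi>
      + m * ((1/l - l) / (2 * mink v \<xi>)) * mink w \<xi>"
proof -
  define al where "al = (1/l - l) / (2 * mink v \<xi>)"
  define be where "be = (1/m - m) / (2 * mink w \<xi>)"
  have "mink (G \<xi> v l) (G \<xi> w m) = mink (l *\<^sub>R v + al *\<^sub>R \<xi>) (m *\<^sub>R w + be *\<^sub>R \<xi>)"
    by (simp add: G_def al_def be_def)
  also have "\<dots> = l * m * mink v w + l * be * mink v \<xi> + m * al * mink w \<xi>"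
    using assms(1) by (simp add: mink_add_left mink_add_right mink_scale_left mink_scale_right
        iso_self mink_sym[of \<xi> w] algebra_simps)
  finally show ?thesis by (simp add: al_def be_def mult.commute mult.left_commute)
qed

lemma G_hyp:
  assumes v: "v \<in> hyp_space" and xi: "isotropic \<xi>" "fst \<xi> > 0" and l: "l > 0"
  shows "G \<xi> v l \<in> hyp_space"
proof -
  have a: "mink v \<xi> > 0" by (rule hyp_mink_iso_sign(1)[OF v xi])
  have vv: "mink v v = 1" using v by (simp add: hyp_space_def)
  have gg: "mink (G \<xi> v l) (G \<xi> v l) = 1"
  proof -
    have "mink (G \<xi> v l) (G \<xi> v l) = l * l + 2 * (l * ((1/l - l) / (2 * mink v \<xi>)) * mink v \<xi>)"
      using G_G[OF xi(1), of v v l l] a vv by simp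
    also have "l * ((1/l - l) / (2 * mink v \<xi>)) * mink v \<xi> = (1 - l * l) / 2"
      using a l by (simp add: field_simps)
    finally show ?thesis by (simp add: diff_divide_distrib)
  qed
  have "fst (G \<xi> v l) > 0"
  proof (rule ccontr)
    assume "\<not> fst (G \<xi> v l) > 0"
    moreover have "fst (G \<xi> v l) \<noteq> 0"
    proof
      assume f0: "fst (G \<xi> v l) = 0"
      have "0 \<le> snd (G \<xi> v l) \<bullet> snd (G \<xi> v l)" by simp
      moreover have "mink (G \<xi> v l) (G \<xi> v l) = - (snd (G \<xi> v l) \<bullet> snd (G \<xi> v l))"
        using f0 by (simp add: mink_def)
      ultimately show False using gg by linarith
    qed
    ultimately have "- G \<xi> v l \<in> hyp_space" using gg by (simp add: hyp_space_def mink_def)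
    hence "mink (- G \<xi> v l) \<xi> > 0" by (rule hyp_mink_iso_sign(1)[OF _ xi])
    moreover have "mink (G \<xi> v l) \<xi> > 0" using G_xi[OF xi(1)] a l by simp
    ultimately show False by (simp add: mink_minus_left)
  qed
  thus ?thesis using gg by (simp add: hyp_space_def)
qed

lemma G_one: "G \<xi> v 1 = v" by (simp add: G_def)

lemma busemann_ratio:
  assumes v: "v \<in> hyp_space" and w: "w \<in> hyp_space" and xi: "isotropic \<xi>"
    and a: "mink v \<xi> > 0" and b: "mink w \<xi> > 0"
  shows "mink w \<xi> / mink v \<xi> + mink v \<xi> / mink w \<xi> \<le> 2 * mink v w"
proof -
  have "(mink v \<xi>)^2 + (mink w \<xi>)^2 \<le> 2 * mink v \<xi> * mink w \<xi> * mink v w"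
    by (rule busemann[OF v w xi])
  hence "((mink v \<xi>)^2 + (mink w \<xi>)^2) / (mink v \<xi> * mink w \<xi>) \<le> 2 * mink v w"
    using a b by (simp add: divide_le_eq mult.commute mult.left_commute)
  moreover have "((mink v \<xi>)^2 + (mink w \<xi>)^2) / (mink v \<xi> * mink w \<xi>)
     = mink w \<xi> / mink v \<xi> + mink v \<xi> / mink w \<xi>"
    using a b by (simp add: field_simps power2_eq_square)
  ultimately show ?thesis by simp
qed

lemma x_plus_inv_mono:
  assumes "1 \<le> l" "l \<le> (r::real)" shows "l + 1/l \<le> r + 1/r"
proof -
  have "r + 1/r - (l + 1/l) = (r - l) * (1 - 1/(r*l))" using assms by (simp add: field_simps)
  moreover have "1 * 1 \<le> r * l" by (rule mult_mono) (use assms in auto)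
  hence "1/(r*l) \<le> 1" using assms by (simp add: field_simps)
  ultimately have "r + 1/r - (l + 1/l) \<ge> 0" using assms by simp
  thus ?thesis by simp
qed



definition Pr :: "real \<Rightarrow> real \<times> 'a::real_inner \<Rightarrow> real \<times> 'a \<Rightarrow> real \<times> 'a" where
  "Pr e \<xi> v = G \<xi> v (e / mink v \<xi>)"

lemma busemann_sep:
  assumes v: "v \<in> hyp_space" and w: "w \<in> hyp_space" and xi: "isotropic \<xi>"
    and a: "mink v \<xi> > 0" and b: "mink w \<xi> > 0" and r: "1 \<le> r0" "r0 \<le> mink w \<xi> / mink v \<xi>"
  shows "(r0 + 1/r0) / 2 \<le> mink v w"
proof -
  have "r0 + 1/r0 \<le> mink w \<xi> / mink v \<xi> + 1 / (mink w \<xi> / mink v \<xi>)"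
    by (rule x_plus_inv_mono[OF r])
  also have "\<dots> = mink w \<xi> / mink v \<xi> + mink v \<xi> / mink w \<xi>" by simp
  also have "\<dots> \<le> 2 * mink v w" by (rule busemann_ratio[OF v w xi a b])
  finally show ?thesis by simp
qed

context
  fixes \<xi> :: "real \<times> 'a::{real_inner,complete_space}" and e :: real
  assumes xi: "isotropic \<xi>" and xi_pos: "fst \<xi> > 0" and e_pos: "e > 0"
begin

lemma apos: "v \<in> hyp_space \<Longrightarrow> mink v \<xi> > 0"
  by (rule hyp_mink_iso_sign(1)[OF _ xi xi_pos])

lemma Pr_hyp: "v \<in> hyp_space \<Longrightarrow> Pr e \<xi> v \<in> hyp_space"
  unfolding Pr_def by (rule G_hyp[OF _ xi xi_pos]) (use apos e_pos in auto)

lemma Pr_xi: "v \<in> hyp_space \<Longrightarrow> mink (Pr e \<xi> v) \<xi> = e"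
  unfolding Pr_def using G_xi[OF xi, of v] apos[of v] by simp

lemma Pr_fix: "mink v \<xi> = e \<Longrightarrow> Pr e \<xi> v = v"
  unfolding Pr_def using e_pos by (simp add: G_one)

lemma Pr_Pr:
  assumes v: "v \<in> hyp_space" and w: "w \<in> hyp_space"
  shows "mink (Pr e \<xi> v) (Pr e \<xi> w) = 1 + (e^2 / (mink v \<xi> * mink w \<xi>)) *
     (mink v w - ((mink v \<xi>)^2 + (mink w \<xi>)^2) / (2 * mink v \<xi> * mink w \<xi>))"
proof -
  define a where "a = mink v \<xi>"
  define b where "b = mink w \<xi>"
  have a: "a > 0" and b: "b > 0" using apos v w by (auto simp: a_def b_def)
  have "mink (Pr e \<xi> v) (Pr e \<xi> w) = (e/a) * (e/b) * mink v w + (e/a) * ((1/(e/b) - e/b) / (2 * b)) * a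
      + (e/b) * ((1/(e/a) - e/a) / (2 * a)) * b"
    unfolding Pr_def a_def b_def by (rule G_G[OF xi]) (use a b in \<open>auto simp: a_def b_def\<close>)
  also have "\<dots> = 1 + (e^2 / (a * b)) * (mink v w - (a^2 + b^2) / (2 * a * b))"
    using a b e_pos by (simp add: field_simps power2_eq_square)
  finally show ?thesis by (simp add: a_def b_def)
qed

lemma Pr_key:
  assumes v: "v \<in> hyp_space" and w: "w \<in> hyp_space"
  shows "mink (Pr e \<xi> v) (Pr e \<xi> w) - 1 \<le> (e^2 / (mink v \<xi> * mink w \<xi>)) * (mink v w - 1)"
    and "mink v \<xi> \<ge> e \<Longrightarrow> mink w \<xi> \<ge> e \<Longrightarrow> mink (Pr e \<xi> v) (Pr e \<xi> w) \<le> mink v w"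
proof -
  define a where "a = mink v \<xi>"
  define b where "b = mink w \<xi>"
  define s where "s = (a^2 + b^2) / (2 * a * b)"
  define K where "K = e^2 / (a * b)"
  have a: "a > 0" and b: "b > 0" using apos v w by (auto simp: a_def b_def)
  have K0: "K > 0" using a b e_pos by (simp add: K_def)
  have s1: "s \<ge> 1"
  proof -
    have "2 * a * b \<le> a^2 + b^2" using zero_le_power2[of "a - b"] by (simp add: power2_eq_square algebra_simps)
    thus ?thesis using a b by (simp add: s_def)
  qed
  have sc: "s \<le> mink v w"
  proof -
    have "b / a + a / b \<le> 2 * mink v w" using busemann_ratio[OF v w xi] a b by (simp add: a_def b_def)
    moreover have "s = (b / a + a / b) / 2" using a b by (simp add: s_def field_simps power2_eq_square)
    ultimately show ?thesis by simp
  qed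
  have P: "mink (Pr e \<xi> v) (Pr e \<xi> w) = 1 + K * (mink v w - s)"
    using Pr_Pr[OF v w] by (simp add: K_def s_def a_def b_def)
  show "mink (Pr e \<xi> v) (Pr e \<xi> w) - 1 \<le> (e^2 / (mink v \<xi> * mink w \<xi>)) * (mink v w - 1)"
    unfolding P K_def[symmetric, unfolded a_def b_def] using K0 s1 by (simp add: mult_left_mono)
  assume ae: "mink v \<xi> \<ge> e" and be: "mink w \<xi> \<ge> e"
  have "e * e \<le> a * b" using ae be e_pos by (intro mult_mono) (auto simp: a_def b_def)
  hence K1: "K \<le> 1" using a b by (simp add: K_def power2_eq_square)
  have "K * (mink v w - s) \<le> 1 * (mink v w - s)" using K1 sc by (intro mult_right_mono) auto
  thus "mink (Pr e \<xi> v) (Pr e \<xi> w) \<le> mink v w" using P s1 by simp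
qed

lemma Pr_depth:
  assumes v: "v \<in> hyp_space" and w: "w \<in> hyp_space" and ve: "mink v \<xi> \<le> e" and we: "mink w \<xi> \<ge> e"
  shows "mink v (Pr e \<xi> v) \<le> mink v w"
proof -
  define a where "a = mink v \<xi>"
  have a: "a > 0" using apos v by (simp add: a_def)
  have "mink v (Pr e \<xi> v) = (e/a + 1/(e/a)) / 2"
    unfolding Pr_def a_def by (rule G_v[OF xi]) (use a v e_pos in \<open>auto simp: a_def hyp_space_def\<close>)
  also have "\<dots> \<le> mink v w"
    by (rule busemann_sep[OF v w xi]) (use a ve we e_pos apos[OF w] in \<open>auto simp: a_def field_simps\<close>)
  finally show ?thesis .
qed

lemma depth_bound:
  assumes x: "x \<in> hyp_space" and v: "v \<in> hyp_space" and xe: "mink x \<xi> \<ge> e"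
  shows "e / mink v \<xi> \<le> 2 * mink x v"
proof -
  have a: "mink v \<xi> > 0" "mink x \<xi> > 0" using apos v x by auto
  have "mink x \<xi> / mink v \<xi> + mink v \<xi> / mink x \<xi> \<le> 2 * mink v x"
    by (rule busemann_ratio[OF v x xi a])
  moreover have "e / mink v \<xi> \<le> mink x \<xi> / mink v \<xi>" using xe a by (simp add: divide_right_mono)
  moreover have "mink v \<xi> / mink x \<xi> > 0" using a by simp
  ultimately show ?thesis by (simp add: mink_sym)
qed

end



definition hb :: "real \<times> 'a::{real_inner,complete_space} \<Rightarrow> real \<Rightarrow> (real \<times> 'a) set" where
  "hb \<xi> e = {v \<in> hyp_space. 0 < mink v \<xi> \<and> mink v \<xi> < e}"

lemma hb_empty: fixes \<xi> :: "real \<times> 'a::{real_inner,complete_space}" assumes "isotropic \<xi>" "fst \<xi> < 0" shows "hb \<xi> e = {}"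
proof -
  { fix v :: "real \<times> 'a" assume "v \<in> hyp_space" hence "mink v \<xi> < 0" by (rule hyp_mink_iso_sign(2)[OF _ assms]) }
  thus ?thesis by (fastforce simp: hb_def)
qed

lemma hclosure_empty: "hclosure {} = {}" unfolding hclosure_def using zero_less_one by blast

lemma hboundary_empty: "hboundary {} = {}" by (simp add: hboundary_def hclosure_empty)

lemma sub_hclosure: "A \<subseteq> hyp_space \<Longrightarrow> A \<subseteq> hclosure A"
proof
  fix x assume A: "A \<subseteq> hyp_space" and x: "x \<in> A"
  hence xh: "x \<in> hyp_space" by auto
  show "x \<in> hclosure A" unfolding hclosure_def
    using xh x hdist_self[OF xh] by (auto intro!: bexI[of _ x])
qed

lemma hclosure_hyp: "hclosure A \<subseteq> hyp_space" unfolding hclosure_def by auto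

lemma half_gt1: "(r0::real) > 1 \<Longrightarrow> (r0 + 1/r0) / 2 > 1"
proof -
  assume r: "r0 > 1"
  have "(r0 - 1)^2 > 0" using r by simp
  hence "r0 * r0 + 1 > 2 * r0" by (simp add: power2_eq_square algebra_simps)
  thus ?thesis using r by (simp add: field_simps)
qed

lemma far:
  assumes v: "v \<in> hyp_space" and w: "w \<in> hyp_space" and xi: "isotropic \<xi>"
    and a: "mink v \<xi> > 0" and b: "mink w \<xi> > 0" and r: "1 < r0" "r0 \<le> mink w \<xi> / mink v \<xi>"
  shows "arcosh ((r0 + 1/r0) / 2) \<le> hdist v w"
  unfolding hdist_def
  by (rule arcosh_mono_real) (use half_gt1[OF r(1)] busemann_sep[OF v w xi a b _ r(2)] r(1) in auto)

context
  fixes \<xi> :: "real \<times> 'a::{real_inner,complete_space}" and e :: real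
  assumes xi: "isotropic \<xi>" and xi_pos: "fst \<xi> > 0" and e_pos: "e > 0"
begin

lemma hboundary_hb: "hboundary (hb \<xi> e) = {v \<in> hyp_space. mink v \<xi> = e}"
proof
  show "hboundary (hb \<xi> e) \<subseteq> {v \<in> hyp_space. mink v \<xi> = e}"
  proof
    fix v assume "v \<in> hboundary (hb \<xi> e)"
    hence c1: "v \<in> hclosure (hb \<xi> e)" and c2: "v \<in> hclosure (hyp_space - hb \<xi> e)"
      by (auto simp: hboundary_def)
    have v: "v \<in> hyp_space" using c1 by (simp add: hclosure_def)
    have a: "mink v \<xi> > 0" by (rule apos[OF xi xi_pos e_pos v])
    have "mink v \<xi> = e"
    proof (rule ccontr)
      assume ne: "mink v \<xi> \<noteq> e"
      show False
      proof (cases "mink v \<xi> > e")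
        case True
        define r0 where "r0 = mink v \<xi> / e"
        have r0: "r0 > 1" using True e_pos by (simp add: r0_def)
        have "arcosh ((r0 + 1/r0) / 2) > 0" using half_gt1[OF r0] by simp
        then obtain w where w: "w \<in> hb \<xi> e" and d: "hdist v w < arcosh ((r0 + 1/r0) / 2)"
          using c1 unfolding hclosure_def by blast
        have wh: "w \<in> hyp_space" and b: "mink w \<xi> > 0" "mink w \<xi> < e" using w by (auto simp: hb_def)
        have "r0 \<le> mink v \<xi> / mink w \<xi>" unfolding r0_def
          using b a e_pos by (intro divide_left_mono) auto
        hence "arcosh ((r0 + 1/r0) / 2) \<le> hdist w v" by (rule far[OF wh v xi b(1) a r0])
        thus False using d hdist_sym[of v w] by simp
      next
        case False
        hence lt: "mink v \<xi> < e" using ne by simp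
        define r0 where "r0 = e / mink v \<xi>"
        have r0: "r0 > 1" using lt a by (simp add: r0_def)
        have "arcosh ((r0 + 1/r0) / 2) > 0" using half_gt1[OF r0] by simp
        then obtain w where w: "w \<in> hyp_space - hb \<xi> e" and d: "hdist v w < arcosh ((r0 + 1/r0) / 2)"
          using c2 unfolding hclosure_def by blast
        have wh: "w \<in> hyp_space" using w by simp
        have b: "mink w \<xi> > 0" by (rule apos[OF xi xi_pos e_pos wh])
        hence be: "mink w \<xi> \<ge> e" using w wh by (auto simp: hb_def)
        have "r0 \<le> mink w \<xi> / mink v \<xi>" unfolding r0_def
          using be a by (intro divide_right_mono) auto
        hence "arcosh ((r0 + 1/r0) / 2) \<le> hdist v w" by (rule far[OF v wh xi a b r0])
        thus False using d by simp
      qed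
    qed
    thus "v \<in> {v \<in> hyp_space. mink v \<xi> = e}" using v by simp
  qed
next
  show "{v \<in> hyp_space. mink v \<xi> = e} \<subseteq> hboundary (hb \<xi> e)"
  proof
    fix v assume "v \<in> {v \<in> hyp_space. mink v \<xi> = e}"
    hence v: "v \<in> hyp_space" and ae: "mink v \<xi> = e" by auto
    have "v \<in> hclosure (hyp_space - hb \<xi> e)"
      unfolding hclosure_def using v ae hdist_self[OF v] by (auto simp: hb_def intro!: bexI[of _ v])
    moreover have "v \<in> hclosure (hb \<xi> e)"
      unfolding hclosure_def
    proof (intro CollectI conjI allI impI)
      show "v \<in> hyp_space" by (rule v)
      fix eps :: real assume eps: "eps > 0"
      define t where "t = eps / 2"
      define l where "l = exp (- t)"
      have t: "t > 0" using eps by (simp add: t_def)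
      have l0: "l > 0" and l1: "l < 1" using t by (auto simp: l_def)
      have wh: "G \<xi> v l \<in> hyp_space" by (rule G_hyp[OF v xi xi_pos l0])
      have "mink (G \<xi> v l) \<xi> = l * e" using G_xi[OF xi, of v l] ae e_pos by simp
      hence "G \<xi> v l \<in> hb \<xi> e" using wh l0 l1 e_pos by (simp add: hb_def)
      moreover have "mink v (G \<xi> v l) = cosh t"
      proof -
        have "mink v (G \<xi> v l) = (l + 1/l) / 2"
          by (rule G_v[OF xi]) (use ae e_pos v l0 in \<open>auto simp: hyp_space_def\<close>)
        thus ?thesis by (simp add: l_def cosh_field_def exp_minus field_simps)
      qed
      hence "hdist v (G \<xi> v l) = t" using t by (simp add: hdist_def arcosh_cosh_real)
      ultimately show "\<exists>y\<in>hb \<xi> e. hdist v y < eps" using t eps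
        by (intro bexI[of _ "G \<xi> v l"]) (auto simp: t_def)
    qed
    ultimately show "v \<in> hboundary (hb \<xi> e)" by (simp add: hboundary_def)
  qed
qed

end

lemma CD_mono:
  assumes "S \<subseteq> T"
  shows "chain_dist d T x y \<le> chain_dist d S x y"
  unfolding chain_dist_def
  apply (rule SUP_mono', rule INF_superset_mono)
   apply (rule subsetI)
  subgoal premises prems for eps L
  proof -
    from prems obtain p n where L: "L = (\<Sum>i<n. d (p i) (p (Suc i)))" and h: "p 0 = x" "p n = y"
      "\<forall>i\<le>n. p i \<in> S" "\<forall>i<n. d (p i) (p (Suc i)) \<le> eps" by blast
    have "\<forall>i\<le>n. p i \<in> T" using h(3) assms by blast
    with L h show ?thesis by blast
  qed
  by simp

lemma CD_map:
  assumes fS: "\<And>u. u \<in> S \<Longrightarrow> f u \<in> T"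
    and lip: "\<And>u w. u \<in> S \<Longrightarrow> w \<in> S \<Longrightarrow> d (f u) (f w) \<le> d u w"
    and fx: "f x = x'" and fy: "f y = y'"
  shows "chain_dist d T x' y' \<le> chain_dist d S x y"
  unfolding chain_dist_def
proof (rule SUP_mono', rule INF_mono)
  fix eps m
  assume "m \<in> {\<Sum>i<n. d (p i) (p (Suc i)) |p n. p 0 = x \<and> p n = y \<and> (\<forall>i\<le>n. p i \<in> S) \<and>
                 (\<forall>i<n. d (p i) (p (Suc i)) \<le> eps)}"
  then obtain p n where m: "m = (\<Sum>i<n. d (p i) (p (Suc i)))" and p0: "p 0 = x" and pn: "p n = y"
    and pS: "\<forall>i\<le>n. p i \<in> S" and st: "\<forall>i<n. d (p i) (p (Suc i)) \<le> eps" by blast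
  define q where "q = (\<lambda>i. f (p i))"
  have lq: "\<And>i. i < n \<Longrightarrow> d (q i) (q (Suc i)) \<le> d (p i) (p (Suc i))"
    unfolding q_def using pS by (intro lip) auto
  have "(\<Sum>i<n. d (q i) (q (Suc i))) \<in> {\<Sum>i<n. d (p i) (p (Suc i)) |p n. p 0 = x' \<and> p n = y' \<and> (\<forall>i\<le>n. p i \<in> T) \<and>
                 (\<forall>i<n. d (p i) (p (Suc i)) \<le> eps)}"
  proof -
    have "\<forall>i\<le>n. q i \<in> T" using pS fS by (simp add: q_def)
    moreover have "\<forall>i<n. d (q i) (q (Suc i)) \<le> eps" using st lq by (meson order.trans)
    moreover have "q 0 = x'" "q n = y'" using p0 pn fx fy by (simp_all add: q_def)
    ultimately show ?thesis by blast
  qed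
  moreover have "(\<Sum>i<n. d (q i) (q (Suc i))) \<le> m" unfolding m by (rule sum_mono) (use lq in auto)
  ultimately show "\<exists>L\<in>{\<Sum>i<n. d (p i) (p (Suc i)) |p n. p 0 = x' \<and> p n = y' \<and> (\<forall>i\<le>n. p i \<in> T) \<and>
                 (\<forall>i<n. d (p i) (p (Suc i)) \<le> eps)}. ereal L \<le> ereal m" by auto
qed

lemma CD_fin:
  assumes "\<And>eps. eps > 0 \<Longrightarrow> \<exists>p n. p 0 = x \<and> p n = y \<and> (\<forall>i\<le>n. p i \<in> S) \<and>
             (\<forall>i<n. d (p i) (p (Suc i)) \<le> eps) \<and> (\<Sum>i<n. d (p i) (p (Suc i))) \<le> M"
  shows "chain_dist d S x y < \<infinity>"
proof -
  have "chain_dist d S x y \<le> ereal M"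
    unfolding chain_dist_def
  proof (rule SUP_least)
    fix eps :: real assume "eps \<in> {0<..}"
    hence "eps > 0" by simp
    from assms[OF this] obtain p n where h: "p 0 = x \<and> p n = y \<and> (\<forall>i\<le>n. p i \<in> S) \<and>
             (\<forall>i<n. d (p i) (p (Suc i)) \<le> eps) \<and> (\<Sum>i<n. d (p i) (p (Suc i))) \<le> M"
      by blast
    show "(INF L \<in> {\<Sum>i<n. d (p i) (p (Suc i)) |p n. p 0 = x \<and> p n = y \<and> (\<forall>i\<le>n. p i \<in> S) \<and>
                 (\<forall>i<n. d (p i) (p (Suc i)) \<le> eps)}. ereal L) \<le> ereal M"
      by (rule INF_lower2[of "\<Sum>i<n. d (p i) (p (Suc i))"]) (use h in auto)
  qed
  moreover have "ereal M < \<infinity>" by simp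
  ultimately show ?thesis by (rule le_less_trans)
qed



lemma sinh_mult_ge:
  assumes m: "m \<ge> (1::real)" and u: "u \<ge> 0"
  shows "m * sinh u \<le> sinh (m * u)"
proof -
  have "(\<lambda>u. sinh (m * u) - m * sinh u) 0 \<le> (\<lambda>u. sinh (m * u) - m * sinh u) u"
  proof (rule DERIV_nonneg_imp_nondecreasing[OF u])
    fix x :: real assume x: "0 \<le> x" "x \<le> u"
    have "((\<lambda>u. sinh (m * u) - m * sinh u) has_real_derivative (cosh (m * x) * m - m * cosh x)) (at x)"
      by (auto intro!: derivative_eq_intros)
    moreover have "cosh x \<le> cosh (m * x)"
      using cosh_real_nonneg_le_iff[of x "m * x"] x m by (simp add: mult_le_cancel_right1)
    hence "cosh (m * x) * m - m * cosh x \<ge> 0" using m by (simp add: algebra_simps mult_left_mono)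
    ultimately show "\<exists>y. ((\<lambda>u. sinh (m * u) - m * sinh u) has_real_derivative y) (at x) \<and> 0 \<le> y" by blast
  qed
  thus ?thesis by simp
qed

lemma cosh_mult_ge:
  assumes m: "m \<ge> (1::real)" and t: "t \<ge> 0"
  shows "1 + m^2 * (cosh t - 1) \<le> cosh (m * t)"
proof -
  have "(\<lambda>u. cosh (m * u) - m^2 * cosh u) 0 \<le> (\<lambda>u. cosh (m * u) - m^2 * cosh u) t"
  proof (rule DERIV_nonneg_imp_nondecreasing[OF t])
    fix x :: real assume x: "0 \<le> x" "x \<le> t"
    have "((\<lambda>u. cosh (m * u) - m^2 * cosh u) has_real_derivative (sinh (m * x) * m - m^2 * sinh x)) (at x)"
      by (auto intro!: derivative_eq_intros)
    moreover have "m * sinh x \<le> sinh (m * x)" by (rule sinh_mult_ge[OF m x(1)])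
    hence "sinh (m * x) * m - m^2 * sinh x \<ge> 0" using m
      by (simp add: power2_eq_square algebra_simps)
    ultimately show "\<exists>y. ((\<lambda>u. cosh (m * u) - m^2 * cosh u) has_real_derivative y) (at x) \<and> 0 \<le> y" by blast
  qed
  thus ?thesis by (simp add: algebra_simps)
qed

lemma hdist_le_mult:
  fixes c c' m :: real
  assumes "c \<ge> 1" "m \<ge> 1" "c' \<ge> 1" "c' - 1 \<le> m^2 * (c - 1)"
  shows "arcosh c' \<le> m * arcosh c"
proof -
  have "cosh (arcosh c) = c" by (rule cosh_arcosh_real) (use assms in auto)
  hence "c' \<le> 1 + m^2 * (cosh (arcosh c) - 1)" using assms by simp
  also have "\<dots> \<le> cosh (m * arcosh c)" by (rule cosh_mult_ge) (use assms in auto)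
  finally have "arcosh c' \<le> arcosh (cosh (m * arcosh c))" by (rule arcosh_mono_real[OF assms(3)])
  also have "\<dots> = m * arcosh c" by (rule arcosh_cosh_real) (use assms in auto)
  finally show ?thesis .
qed

definition geo :: "real \<times> 'a::real_inner \<Rightarrow> real \<times> 'a \<Rightarrow> real \<Rightarrow> real \<times> 'a" where
  "geo x y s = (sinh (hdist x y - s) / sinh (hdist x y)) *\<^sub>R x + (sinh s / sinh (hdist x y)) *\<^sub>R y"

lemma sinh_cosh_identity:
  fixes D s s' :: real
  shows "sinh (D - s) * sinh (D - s') + sinh s * sinh s' + (sinh (D - s) * sinh s' + sinh s * sinh (D - s')) * cosh D
     = cosh (s - s') * (sinh D)^2"
proof -
  have c: "cosh D * cosh D = sinh D * sinh D + 1" using cosh_square_eq[of D] by (simp add: power2_eq_square)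
  have gen: "\<And>A C p q p' q' :: real. C * C = A * A + 1 \<Longrightarrow>
     (A * q - C * p) * (A * q' - C * p') + p * p' + ((A * q - C * p) * p' + p * (A * q' - C * p')) * C
     = (q * q' - p * p') * (A * A)" by algebra
  show ?thesis unfolding sinh_diff cosh_diff power2_eq_square
    using gen[OF c, of "cosh s" "sinh s" "cosh s'" "sinh s'"] by (simp add: mult.commute)
qed

context
  fixes x y :: "real \<times> 'a::{real_inner,complete_space}"
  assumes x: "x \<in> hyp_space" and y: "y \<in> hyp_space" and D: "hdist x y > 0"
begin

lemma geo_mink: "mink (geo x y s) (geo x y s') = cosh (s - s')"
proof -
  define D where "D = hdist x y"
  have c: "mink x y = cosh D" unfolding D_def by (rule cosh_hdist[OF x y, symmetric])
  have xx: "mink x x = 1" and yy: "mink y y = 1" using x y by (auto simp: hyp_space_def)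
  have S: "sinh D \<noteq> 0" using D by (simp add: D_def)
  have gen: "\<And>a b a' b'. mink (a *\<^sub>R x + b *\<^sub>R y) (a' *\<^sub>R x + b' *\<^sub>R y) = a * a' + b * b' + (a * b' + b * a') * cosh D"
    by (simp add: mink_add_left mink_add_right mink_scale_left mink_scale_right xx yy c mink_sym[of y x] algebra_simps)
  have "mink (geo x y s) (geo x y s') = (sinh (D - s) / sinh D) * (sinh (D - s') / sinh D) + (sinh s / sinh D) * (sinh s' / sinh D)
        + ((sinh (D - s) / sinh D) * (sinh s' / sinh D) + (sinh s / sinh D) * (sinh (D - s') / sinh D)) * cosh D"
    unfolding geo_def D_def[symmetric] by (rule gen)
  also have "\<dots> = (sinh (D - s) * sinh (D - s') + sinh s * sinh s'
        + (sinh (D - s) * sinh s' + sinh s * sinh (D - s')) * cosh D) / (sinh D)^2"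
    by (simp add: power2_eq_square add_divide_distrib distrib_right)
  also have "\<dots> = cosh (s - s')" unfolding sinh_cosh_identity using S by simp
  finally show ?thesis .
qed

lemma geo_hyp: "0 \<le> s \<Longrightarrow> s \<le> hdist x y \<Longrightarrow> geo x y s \<in> hyp_space"
proof -
  assume s: "0 \<le> s" "s \<le> hdist x y"
  have m: "mink (geo x y s) (geo x y s) = 1" using geo_mink by simp
  have fx: "fst x > 0" and fy: "fst y > 0" using x y by (auto simp: hyp_space_def)
  have S: "sinh (hdist x y) > 0" using D by simp
  have f: "fst (geo x y s) = (sinh (hdist x y - s) * fst x + sinh s * fst y) / sinh (hdist x y)"
    by (simp add: geo_def add_divide_distrib)
  have "sinh (hdist x y - s) * fst x + sinh s * fst y > 0"
  proof (cases "s < hdist x y")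
    case True
    hence "sinh (hdist x y - s) * fst x > 0" using fx by simp
    moreover have "sinh s * fst y \<ge> 0" using s fy by simp
    ultimately show ?thesis by linarith
  next
    case False
    hence "s = hdist x y" using s by simp
    thus ?thesis using fy D by simp
  qed
  hence "fst (geo x y s) > 0" unfolding f using S by simp
  thus ?thesis using m by (simp add: hyp_space_def)
qed

lemma geo_0: "geo x y 0 = x"
  using D by (simp add: geo_def)

lemma geo_D: "geo x y (hdist x y) = y"
  using D by (simp add: geo_def)

lemma geo_dist: "0 \<le> s \<Longrightarrow> s \<le> hdist x y \<Longrightarrow> 0 \<le> s' \<Longrightarrow> s' \<le> hdist x y \<Longrightarrow>
   hdist (geo x y s) (geo x y s') = \<bar>s - s'\<bar>"
proof -
  have "cosh (s - s') = cosh \<bar>s - s'\<bar>" by simp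
  thus ?thesis unfolding hdist_def geo_mink by (simp only: arcosh_cosh_real abs_ge_zero)
qed

end



theorem lemma4p3:
  fixes B :: "'i \<Rightarrow> (real \<times> 'a::{real_inner,complete_space}) set"
    and Q :: "(real \<times> 'a) set"
  assumes horo: "\<And>i. open_horoball (B i)"
    and disj: "\<And>i j. i \<noteq> j \<Longrightarrow> hclosure (B i) \<inter> hclosure (B j) = {}"
    and Q_def: "Q = (\<Union>i. B i)"
  shows "(\<forall>x\<in>hyp_space - Q. \<forall>y\<in>hyp_space - Q. chain_dist hdist (hyp_space - Q) x y < \<infinity>)
       \<and> (\<forall>i. \<forall>x\<in>hboundary (B i). \<forall>y\<in>hboundary (B i).
            chain_dist hdist (hyp_space - Q) x y = chain_dist hdist (hboundary (B i)) x y)"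
proof -
  have "\<forall>i. \<exists>\<xi> e. isotropic \<xi> \<and> e > 0 \<and> B i = hb \<xi> e"
    using horo unfolding open_horoball_def hb_def by blast
  then obtain xi ee where H: "\<And>i. isotropic (xi i) \<and> ee i > 0 \<and> B i = hb (xi i) (ee i)"
    by metis
  have iso: "\<And>i. isotropic (xi i)" and epos: "\<And>i. ee i > 0" and Bhb: "\<And>i. B i = hb (xi i) (ee i)"
    using H by auto
  have Bhyp: "\<And>i. B i \<subseteq> hyp_space" using Bhb by (auto simp: hb_def)
  have Bpos: "\<And>i. B i \<noteq> {} \<Longrightarrow> fst (xi i) > 0"
  proof -
    fix i assume ne: "B i \<noteq> {}"
    have "fst (xi i) \<noteq> 0" by (rule isotropic_fst[OF iso])
    moreover have "\<not> fst (xi i) < 0" using hb_empty[OF iso] ne Bhb by metis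
    ultimately show "fst (xi i) > 0" by linarith
  qed
  have Bdisj: "\<And>i j v. v \<in> B i \<Longrightarrow> v \<in> B j \<Longrightarrow> i = j"
  proof (rule ccontr)
    fix i j v assume "v \<in> B i" "v \<in> B j" "i \<noteq> j"
    thus False using disj[of i j] sub_hclosure[OF Bhyp[of i]] sub_hclosure[OF Bhyp[of j]] by blast
  qed
  have Bmem: "\<And>i v. v \<in> B i \<longleftrightarrow> v \<in> hyp_space \<and> 0 < mink v (xi i) \<and> mink v (xi i) < ee i"
    using Bhb by (auto simp: hb_def)
  have outB: "\<And>i v. B i \<noteq> {} \<Longrightarrow> v \<in> hyp_space \<Longrightarrow> v \<notin> B i \<Longrightarrow> mink v (xi i) \<ge> ee i"
  proof -
    fix i v assume ne: "B i \<noteq> {}" and v: "v \<in> hyp_space" and nv: "v \<notin> B i"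
    have "mink v (xi i) > 0" by (rule apos[OF iso Bpos[OF ne] epos v])
    hence "\<not> mink v (xi i) < ee i" using nv v Bmem[of v i] by blast
    thus "mink v (xi i) \<ge> ee i" by simp
  qed
  have bd: "\<And>i. B i \<noteq> {} \<Longrightarrow> hboundary (B i) = {v \<in> hyp_space. mink v (xi i) = ee i}"
    using hboundary_hb[OF iso Bpos epos] Bhb by metis
  have bdQ: "\<And>i. hboundary (B i) \<subseteq> hyp_space - Q"
  proof
    fix i v assume v: "v \<in> hboundary (B i)"
    hence ne: "B i \<noteq> {}" using hboundary_empty by fastforce
    have vh: "v \<in> hyp_space" and vm: "mink v (xi i) = ee i" using v bd[OF ne] by auto
    have vc: "v \<in> hclosure (B i)" using v by (simp add: hboundary_def)
    have "v \<notin> B j" for j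
    proof (cases "j = i")
      case True thus ?thesis using vm by (simp add: Bmem)
    next
      case False thus ?thesis using disj[of j i] vc sub_hclosure[OF Bhyp[of j]] by blast
    qed
    thus "v \<in> hyp_space - Q" using vh Q_def by auto
  qed
  have QB: "\<And>v. v \<in> Q \<longleftrightarrow> (\<exists>i. v \<in> B i)" using Q_def by auto

  have part2: "\<forall>i. \<forall>x\<in>hboundary (B i). \<forall>y\<in>hboundary (B i).
            chain_dist hdist (hyp_space - Q) x y = chain_dist hdist (hboundary (B i)) x y"
  proof (intro allI ballI)
    fix i x y assume x: "x \<in> hboundary (B i)" and y: "y \<in> hboundary (B i)"
    hence ne: "B i \<noteq> {}" using hboundary_empty by fastforce
    note bdi = bd[OF ne]
    note xp = Bpos[OF ne]
    have le1: "chain_dist hdist (hyp_space - Q) x y \<le> chain_dist hdist (hboundary (B i)) x y"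
      by (rule CD_mono[OF bdQ])
    have le2: "chain_dist hdist (hboundary (B i)) x y \<le> chain_dist hdist (hyp_space - Q) x y"
    proof (rule CD_map[where f = "Pr (ee i) (xi i)"])
      fix u assume "u \<in> hyp_space - Q"
      hence u: "u \<in> hyp_space" by simp
      show "Pr (ee i) (xi i) u \<in> hboundary (B i)"
        unfolding bdi using Pr_hyp[OF iso xp epos u] Pr_xi[OF iso xp epos u] by simp
    next
      fix u w assume u: "u \<in> hyp_space - Q" and w: "w \<in> hyp_space - Q"
      have uh: "u \<in> hyp_space" and wh: "w \<in> hyp_space" using u w by auto
      have ue: "mink u (xi i) \<ge> ee i" using outB[OF ne uh] u QB by blast
      have we: "mink w (xi i) \<ge> ee i" using outB[OF ne wh] w QB by blast
      show "hdist (Pr (ee i) (xi i) u) (Pr (ee i) (xi i) w) \<le> hdist u w"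
        unfolding hdist_def
        by (rule arcosh_mono_real[OF hyp_ge1[OF Pr_hyp[OF iso xp epos uh] Pr_hyp[OF iso xp epos wh]]])
           (rule Pr_key(2)[OF iso xp epos uh wh ue we])
    next
      show "Pr (ee i) (xi i) x = x" using x bdi by (intro Pr_fix[OF iso xp epos]) auto
      show "Pr (ee i) (xi i) y = y" using y bdi by (intro Pr_fix[OF iso xp epos]) auto
    qed
    show "chain_dist hdist (hyp_space - Q) x y = chain_dist hdist (hboundary (B i)) x y"
      using le1 le2 by (rule antisym)
  qed

  define R where "R = (\<lambda>v. if \<exists>i. v \<in> B i then Pr (ee (SOME i. v \<in> B i)) (xi (SOME i. v \<in> B i)) v else v)"
  have Rin: "\<And>i v. v \<in> B i \<Longrightarrow> R v = Pr (ee i) (xi i) v"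
  proof -
    fix i v assume v: "v \<in> B i"
    have "(SOME i. v \<in> B i) = i" using v Bdisj by (metis someI)
    thus "R v = Pr (ee i) (xi i) v" using v by (auto simp: R_def)
  qed
  have Rout: "\<And>v. (\<forall>i. v \<notin> B i) \<Longrightarrow> R v = v" by (simp add: R_def)
  have RQ: "\<And>v :: real \<times> 'a. v \<in> hyp_space \<Longrightarrow> R v \<in> hyp_space - Q"
  proof -
    fix v :: "real \<times> 'a" assume v: "v \<in> hyp_space"
    show "R v \<in> hyp_space - Q"
    proof (cases "\<exists>i. v \<in> B i")
      case True
      then obtain i where vi: "v \<in> B i" by blast
      hence ne: "B i \<noteq> {}" by auto
      have "Pr (ee i) (xi i) v \<in> hboundary (B i)"
        unfolding bd[OF ne] using Pr_hyp[OF iso Bpos[OF ne] epos v] Pr_xi[OF iso Bpos[OF ne] epos v] by simp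
      thus ?thesis using bdQ Rin[OF vi] by auto
    next
      case False thus ?thesis using v Rout QB by auto
    qed
  qed
  have depth: "\<And>i v w. v \<in> B i \<Longrightarrow> w \<in> hyp_space \<Longrightarrow> w \<notin> B i \<Longrightarrow> hdist v (R v) \<le> hdist v w"
  proof -
    fix i v w assume vi: "v \<in> B i" and w: "w \<in> hyp_space" and wn: "w \<notin> B i"
    have ne: "B i \<noteq> {}" using vi by auto
    have v: "v \<in> hyp_space" using vi Bhyp by auto
    show "hdist v (R v) \<le> hdist v w"
      unfolding Rin[OF vi] hdist_def
      by (rule arcosh_mono_real[OF hyp_ge1[OF v Pr_hyp[OF iso Bpos[OF ne] epos v]]])
         (rule Pr_depth[OF iso Bpos[OF ne] epos v w], use vi in \<open>simp add: Bmem\<close>, rule outB[OF ne w wn])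
  qed
  have cross: "\<And>i v w. v \<in> B i \<Longrightarrow> w \<in> hyp_space \<Longrightarrow> w \<notin> B i \<Longrightarrow> hdist (R v) (R w) \<le> 3 * hdist v w"
  proof -
    fix i v w assume vi: "v \<in> B i" and w: "w \<in> hyp_space" and wn: "w \<notin> B i"
    have v: "v \<in> hyp_space" using vi Bhyp by auto
    have Rv: "R v \<in> hyp_space" and Rw: "R w \<in> hyp_space" using RQ v w by auto
    have d1: "hdist (R v) v \<le> hdist v w" using depth[OF vi w wn] hdist_sym by metis
    have d2: "hdist w (R w) \<le> hdist v w"
    proof (cases "\<exists>j. w \<in> B j")
      case True
      then obtain j where wj: "w \<in> B j" by blast
      have "v \<notin> B j" using Bdisj vi wj wn by metis
      hence "hdist w (R w) \<le> hdist w v" by (rule depth[OF wj v])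
      thus ?thesis by (simp add: hdist_sym)
    next
      case False
      hence "R w = w" using Rout by blast
      thus ?thesis using hdist_self[OF w] hdist_nonneg[OF v w] by simp
    qed
    have "hdist (R v) (R w) \<le> hdist (R v) v + hdist v (R w)" by (rule hdist_triangle[OF Rv v Rw])
    also have "hdist v (R w) \<le> hdist v w + hdist w (R w)" by (rule hdist_triangle[OF v w Rw])
    finally show "hdist (R v) (R w) \<le> 3 * hdist v w" using d1 d2 by linarith
  qed
  have part1: "\<forall>x\<in>hyp_space - Q. \<forall>y\<in>hyp_space - Q. chain_dist hdist (hyp_space - Q) x y < \<infinity>"
  proof (intro ballI)
    fix x y assume xQ: "x \<in> hyp_space - Q" and yQ: "y \<in> hyp_space - Q"
    have x: "x \<in> hyp_space" and y: "y \<in> hyp_space" using xQ yQ by auto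
    have xn: "\<And>i. x \<notin> B i" and yn: "\<And>i. y \<notin> B i" using xQ yQ QB by auto
    show "chain_dist hdist (hyp_space - Q) x y < \<infinity>"
    proof (cases "hdist x y = 0")
      case True
      show ?thesis
      proof (rule CD_fin[where M = 0])
        fix eps :: real assume eps: "eps > 0"
        define p where "p = (\<lambda>i::nat. if i = 0 then x else y)"
        have "p 0 = x \<and> p 1 = y \<and> (\<forall>i\<le>1. p i \<in> hyp_space - Q) \<and>
             (\<forall>i<1. hdist (p i) (p (Suc i)) \<le> eps) \<and> (\<Sum>i<1. hdist (p i) (p (Suc i))) \<le> 0"
          using True eps xQ yQ by (auto simp: p_def)
        thus "\<exists>p n. p 0 = x \<and> p n = y \<and> (\<forall>i\<le>n. p i \<in> hyp_space - Q) \<and>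
             (\<forall>i<n. hdist (p i) (p (Suc i)) \<le> eps) \<and> (\<Sum>i<n. hdist (p i) (p (Suc i))) \<le> 0" by blast
      qed
    next
      case False
      define D where "D = hdist x y"
      have D: "D > 0" using False hdist_nonneg[OF x y] by (simp add: D_def)
      have Dp: "hdist x y > 0" using D by (simp add: D_def)
      define C where "C = cosh D"
      have C1: "C \<ge> 1" by (simp add: C_def cosh_real_ge_1)
      define L where "L = 3 + 2 * C"
      have L: "L \<ge> 2 * C" "L \<ge> 3" "L > 0" using C1 by (auto simp: L_def)
      have step: "\<And>v w :: real \<times> 'a. v \<in> hyp_space \<Longrightarrow> w \<in> hyp_space \<Longrightarrow> mink x v \<le> C \<Longrightarrow> mink x w \<le> C \<Longrightarrow>
           hdist (R v) (R w) \<le> L * hdist v w"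
      proof -
        fix v w :: "real \<times> 'a" assume v: "v \<in> hyp_space" and w: "w \<in> hyp_space" and xv: "mink x v \<le> C" and xw: "mink x w \<le> C"
        have d0: "hdist v w \<ge> 0" by (rule hdist_nonneg[OF v w])
        consider (same) i where "v \<in> B i" "w \<in> B i"
          | (c1) i where "v \<in> B i" "w \<notin> B i"
          | (c2) i where "w \<in> B i" "v \<notin> B i"
          | (none) "\<forall>i. v \<notin> B i \<and> w \<notin> B i" by blast
        thus "hdist (R v) (R w) \<le> L * hdist v w"
        proof cases
          case same
          have ne: "B i \<noteq> {}" using same by auto
          note xp = Bpos[OF ne]
          define a where "a = mink v (xi i)"
          define b where "b = mink w (xi i)"
          have a: "a > 0" and b: "b > 0" using apos[OF iso xp epos] v w by (auto simp: a_def b_def)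
          have xe: "mink x (xi i) \<ge> ee i" by (rule outB[OF ne x xn])
          have ea: "ee i / a \<le> 2 * C" using depth_bound[OF iso xp epos x v xe] xv by (simp add: a_def)
          have eb: "ee i / b \<le> 2 * C" using depth_bound[OF iso xp epos x w xe] xw by (simp add: b_def)
          have "(ee i)^2 / (a * b) = (ee i / a) * (ee i / b)" by (simp add: power2_eq_square)
          also have "\<dots> \<le> (2 * C) * (2 * C)"
            using ea eb epos[of i] a b C1 by (intro mult_mono) auto
          finally have K: "(ee i)^2 / (a * b) \<le> (2 * C)^2" by (simp add: power2_eq_square)
          have c1: "mink v w \<ge> 1" by (rule hyp_ge1[OF v w])
          have Pv: "Pr (ee i) (xi i) v \<in> hyp_space" and Pw: "Pr (ee i) (xi i) w \<in> hyp_space"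
            using Pr_hyp[OF iso xp epos] v w by auto
          have "mink (Pr (ee i) (xi i) v) (Pr (ee i) (xi i) w) - 1 \<le> (ee i)^2 / (a * b) * (mink v w - 1)"
            using Pr_key(1)[OF iso xp epos v w] by (simp add: a_def b_def)
          also have "\<dots> \<le> (2 * C)^2 * (mink v w - 1)" using K c1 by (intro mult_right_mono) auto
          finally have "arcosh (mink (Pr (ee i) (xi i) v) (Pr (ee i) (xi i) w)) \<le> (2 * C) * arcosh (mink v w)"
            by (intro hdist_le_mult[OF c1] hyp_ge1[OF Pv Pw]) (use C1 in auto)
          hence "hdist (R v) (R w) \<le> (2 * C) * hdist v w"
            using Rin same by (simp add: hdist_def)
          also have "\<dots> \<le> L * hdist v w" using L d0 by (intro mult_right_mono) auto
          finally show ?thesis .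
        next
          case c1
          have "hdist (R v) (R w) \<le> 3 * hdist v w" by (rule cross[OF c1(1) w c1(2)])
          also have "\<dots> \<le> L * hdist v w" using L d0 by (intro mult_right_mono) auto
          finally show ?thesis .
        next
          case c2
          have "hdist (R w) (R v) \<le> 3 * hdist w v" by (rule cross[OF c2(1) v c2(2)])
          also have "\<dots> \<le> L * hdist v w" using L d0 by (simp add: hdist_sym mult_right_mono)
          finally show ?thesis by (simp add: hdist_sym)
        next
          case none
          hence "R v = v" "R w = w" using Rout by auto
          thus ?thesis using L d0 by (simp add: mult_le_cancel_right1)
        qed
      qed
      show ?thesis
      proof (rule CD_fin[where M = "L * D"])
        fix eps :: real assume eps: "eps > 0"
        obtain N :: nat where N: "N > L * D / eps" using reals_Archimedean2 by blast
        have N0: "N > 0" using N L D eps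
          by (metis divide_pos_pos less_trans mult_pos_pos of_nat_0_less_iff)
        define t where "t = D / N"
        have t: "t > 0" using D N0 by (simp add: t_def)
        have Nt: "N * t = D" using N0 by (simp add: t_def)
        define z where "z = (\<lambda>k::nat. geo x y (k * t))"
        define p where "p = (\<lambda>k. R (z k))"
        have zr: "\<And>k. k \<le> N \<Longrightarrow> 0 \<le> k * t \<and> k * t \<le> D"
        proof -
          fix k :: nat assume "k \<le> N"
          hence "real k * t \<le> real N * t" using t by (intro mult_right_mono) auto
          thus "0 \<le> k * t \<and> k * t \<le> D" using t Nt by simp
        qed
        have zh: "\<And>k. k \<le> N \<Longrightarrow> z k \<in> hyp_space"
          unfolding z_def using geo_hyp[OF x y Dp] zr by (simp add: D_def)
        have zx: "\<And>k. k \<le> N \<Longrightarrow> mink x (z k) \<le> C"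
        proof -
          fix k :: nat assume k: "k \<le> N"
          have "mink x (z k) = mink (geo x y 0) (geo x y (k * t))" by (simp add: z_def geo_0[OF x y Dp] D D_def)
          also have "\<dots> = cosh (k * t)" using geo_mink[OF x y Dp, of 0 "k * t"] D D_def by simp
          also have "\<dots> \<le> C" unfolding C_def using zr[OF k] cosh_real_nonneg_le_iff[of "k * t" D] by simp
          finally show "mink x (z k) \<le> C" .
        qed
        have zd: "\<And>k. k < N \<Longrightarrow> hdist (z k) (z (Suc k)) = t"
        proof -
          fix k :: nat assume k: "k < N"
          have "hdist (z k) (z (Suc k)) = \<bar>k * t - (Suc k) * t\<bar>"
            unfolding z_def by (rule geo_dist[OF x y Dp]) (use D_def zr[of k] zr[of "Suc k"] k in auto)
          thus "hdist (z k) (z (Suc k)) = t" using t by (simp add: algebra_simps)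
        qed
        have ps: "\<And>k. k < N \<Longrightarrow> hdist (p k) (p (Suc k)) \<le> L * t"
          unfolding p_def using step zh zx zd by (metis Suc_leI less_imp_le)
        have p0: "p 0 = x" using Rout xn by (simp add: p_def z_def geo_0[OF x y Dp] D D_def)
        have pN: "p N = y"
        proof -
          have "z N = y" unfolding z_def using Nt geo_D[OF x y Dp] D D_def by simp
          thus ?thesis using Rout yn by (simp add: p_def)
        qed
        have pQ: "\<forall>i\<le>N. p i \<in> hyp_space - Q" using RQ zh by (simp add: p_def)
        have Lt: "L * t \<le> eps"
        proof -
          have "L * D / eps < N" by (rule N)
          hence "L * D < N * eps" using eps by (simp add: divide_less_eq)
          thus ?thesis using N0 by (simp add: t_def field_simps)
        qed
        have "(\<Sum>i<N. hdist (p i) (p (Suc i))) \<le> (\<Sum>i<N. L * t)" by (rule sum_mono) (use ps in auto)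
        also have "\<dots> = L * D" using Nt by (simp add: algebra_simps)
        finally have sumle: "(\<Sum>i<N. hdist (p i) (p (Suc i))) \<le> L * D" .
        show "\<exists>p n. p 0 = x \<and> p n = y \<and> (\<forall>i\<le>n. p i \<in> hyp_space - Q) \<and>
             (\<forall>i<n. hdist (p i) (p (Suc i)) \<le> eps) \<and> (\<Sum>i<n. hdist (p i) (p (Suc i))) \<le> L * D"
          using p0 pN pQ ps Lt sumle by (intro exI[of _ p] exI[of _ N]) (auto intro: order.trans)
      qed
    qed
  qed
  show ?thesis using part1 part2 by blast
qed


end
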